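(* In the setting below, suppose that the function $x\mapsto f(x)+g(Ax)$ is bounded below on $\mathbb R^n$ (equivalently, $F(x)=f(x)+g(Ax)+\Phi_{0,\lambda}(Bx-b)$ is bounded below) and that $\{x:\ x\in\operatorname{ri}(\operatorname{dom}f),\ Ax\in\operatorname{ri}(\operatorname{dom}g),\ Bx=b\}\neq\emptyset$, where "$\operatorname{ri}$" may be omitted for $f$ (resp. $g$) if $f$ (resp. $g$) is polyhedral. Then for every $\mu>0$ the problem $\inf_{w=[y;z]}\ \Xi(w)+\Psi_{0,\mu}(z)$ has a global minimizer.
   Context: Let $f:\mathbb R^n\to(-\infty,\infty]$ and $g:\mathbb R^m\to(-\infty,\infty]$ be proper, lsc and convex, with convex conjugates $f^*(q)=\sup_x\{\langle q,x\rangle-f(x)\}$, $g^*$. Let $A\in\mathbb R^{m\times n}$, $B\in\mathbb R^{r\times n}$, $b\in\mathbb R^r$, $\lambda,\mu\in\mathbb R^r$ with $\lambda,\mu>0$. $\Phi_{0,\lambda}(u)=\sum_i\lambda_i\mathbf 1_{\{u_i\neq0\}}$. For $w=[y;z]\in\mathbb R^m\times\mathbb R^r$, $\Xi(w):=f^*(-A^\top y-B^\top z)+g^*(y)+\langle b,z\rangle$. $\Psi_{0,\mu}(z)=\sum_{i=1}^r\mu_i\mathbf 1_{\{z_i\ne0\}}$. $\operatorname{ri}$ denotes relative interior. *)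

theory Defs
  imports "HOL-Analysis.Analysis"
begin

definition epigraph :: "('a::euclidean_space \<Rightarrow> ereal) \<Rightarrow> ('a \<times> real) set" where
  "epigraph f = {(x, t). f x \<le> ereal t}"

definition edom :: "('a::euclidean_space \<Rightarrow> ereal) \<Rightarrow> 'a set" where
  "edom f = {x. f x < \<infinity>}"

definition proper_fun :: "('a::euclidean_space \<Rightarrow> ereal) \<Rightarrow> bool" where
  "proper_fun f \<longleftrightarrow> (\<forall>x. f x \<noteq> -\<infinity>) \<and> (\<exists>x. f x < \<infinity>)"

definition convex_fun :: "('a::euclidean_space \<Rightarrow> ereal) \<Rightarrow> bool" where
  "convex_fun f \<longleftrightarrow> convex (epigraph f)"

definition lsc_fun :: "('a::euclidean_space \<Rightarrow> ereal) \<Rightarrow> bool" where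
  "lsc_fun f \<longleftrightarrow> (\<forall>x. f x \<le> Liminf (at x) f)"

definition polyhedral_fun :: "('a::euclidean_space \<Rightarrow> ereal) \<Rightarrow> bool" where
  "polyhedral_fun f \<longleftrightarrow> polyhedron (epigraph f)"

definition conj :: "('a::euclidean_space \<Rightarrow> ereal) \<Rightarrow> 'a \<Rightarrow> ereal" where
  "conj f q = (SUP x. ereal (q \<bullet> x) - f x)"

definition Xi :: "(real^'n \<Rightarrow> ereal) \<Rightarrow> (real^'m \<Rightarrow> ereal) \<Rightarrow> real^'n^'m \<Rightarrow> real^'n^'r
                  \<Rightarrow> real^'r \<Rightarrow> real^'m \<Rightarrow> real^'r \<Rightarrow> ereal" where
  "Xi f g A B b y z =
     conj f (- (transpose A *v y) - (transpose B *v z)) + conj g y + ereal (b \<bullet> z)"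

definition Psi0 :: "real^'r \<Rightarrow> real^'r \<Rightarrow> real" where
  "Psi0 \<mu> z = (\<Sum>i\<in>UNIV. \<mu> $ i * (if z $ i \<noteq> 0 then 1 else 0))"

end

theory Submission
  imports Defs
begin

lemma aux_half: "(0::real) \<le> X + (t - (t + X + v) / 2) \<Longrightarrow> t + X < v \<Longrightarrow> False"
  by (simp add: field_simps)

lemma sep_nonvertical_int:
  fixes K :: "('a::euclidean_space \<times> real) set"
  assumes cK: "convex K" and e: "e > 0" and ball: "ball 0 e \<subseteq> fst ` K"
    and low: "\<And>t. (0, t) \<in> K \<Longrightarrow> v \<le> t"
  shows "\<exists>l. \<forall>w t. (w, t) \<in> K \<longrightarrow> v \<le> t + l \<bullet> w"
proof -
  define S where "S = {(w, t - s) | w t s. (w, t) \<in> K \<and> s < v}"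
  have S_eq: "S = K + (\<lambda>s. (0, - s)) ` {..<v}"
    unfolding S_def set_plus_def by force
  have cS: "convex S" unfolding S_eq
    by (intro convex_set_plus cK convex_linear_image) (auto intro: linearI simp: algebra_simps)
  have "0 \<notin> S"
  proof
    assume "0 \<in> S"
    then obtain w t s where "(w,t) \<in> K" "s < v" "(0::'a, 0::real) = (w, t - s)"
      unfolding S_def by (auto simp: zero_prod_def)
    then show False using low[of t] by auto
  qed
  from separating_hyperplane_set_0[OF cS this] obtain a where
    a0: "a \<noteq> 0" and aS: "\<forall>x\<in>S. 0 \<le> a \<bullet> x" by blast
  obtain l \<alpha> where a: "a = (l, \<alpha>)" by (cases a)
  have key: "0 \<le> l \<bullet> w + \<alpha> * (t - s)" if "(w,t) \<in> K" "s < v" for w t s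
    using aS that unfolding S_def a by (force simp: inner_Pair)
  have "\<alpha> \<ge> 0"
  proof (rule ccontr)
    assume "\<not> \<alpha> \<ge> 0"
    hence neg: "\<alpha> < 0" by simp
    have "0 \<in> fst ` K" using ball e by auto
    then obtain t where wt: "(0, t) \<in> K" by force
    define s where "s = min (v - 1) (t + 1 / \<alpha>)"
    have "s < v" unfolding s_def by simp
    from key[OF wt this] have "0 \<le> \<alpha> * (t - s)" by simp
    moreover have "t - s \<ge> - 1 / \<alpha>" unfolding s_def by simp
    hence "\<alpha> * (t - s) \<le> \<alpha> * (- 1 / \<alpha>)" using neg
      by (intro mult_left_mono_neg) auto
    hence "\<alpha> * (t - s) \<le> -1" using neg by simp
    ultimately show False by simp
  qed
  moreover have "\<alpha> \<noteq> 0"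
  proof
    assume z: "\<alpha> = 0"
    hence l0: "l \<noteq> 0" using a0 a by (auto simp: zero_prod_def)
    define w where "w = - (e / 2 / norm l) *\<^sub>R l"
    have "norm w = e / 2" using l0 e unfolding w_def by simp
    hence "w \<in> ball 0 e" using e by simp
    with ball obtain t where wt: "(w, t) \<in> K" by force
    from key[OF wt, of "v - 1"] z have "0 \<le> l \<bullet> w" by simp
    moreover have "l \<bullet> w = - (e / 2 / norm l) * (norm l)^2"
      unfolding w_def by (simp add: power2_norm_eq_inner)
    moreover have "- (e / 2 / norm l) * (norm l)^2 < 0" using l0 e by (simp add: power2_eq_square)
    ultimately show False by simp
  qed
  ultimately have apos: "\<alpha> > 0" by simp
  show ?thesis
  proof (intro exI allI impI)
    fix w t assume wt: "(w, t) \<in> K"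
    have q: "(l /\<^sub>R \<alpha>) \<bullet> w = (l \<bullet> w) / \<alpha>" by (simp add: divide_inverse mult.commute)
    show "v \<le> t + (l /\<^sub>R \<alpha>) \<bullet> w"
    proof (rule ccontr)
      assume "\<not> v \<le> t + (l /\<^sub>R \<alpha>) \<bullet> w"
      hence lt: "t + (l \<bullet> w) / \<alpha> < v" using q by simp
      define s where "s = (t + (l \<bullet> w) / \<alpha> + v) / 2"
      have "s < v" using lt unfolding s_def by simp
      from key[OF wt this] have "0 \<le> l \<bullet> w + \<alpha> * (t - s)" .
      hence "0 \<le> (l \<bullet> w) / \<alpha> + (t - s)" using apos
        by (simp add: field_simps)
      then show False using lt aux_half[of "(l \<bullet> w) / \<alpha>" t v] unfolding s_def by blast
    qed
  qed
qed

lemma sep_nonvertical_ri: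
  fixes K :: "('a::euclidean_space \<times> real) set"
  assumes cK: "convex K" and ri: "0 \<in> rel_interior (fst ` K)"
    and low: "\<And>t. (0, t) \<in> K \<Longrightarrow> v \<le> t"
  shows "\<exists>l. \<forall>w t. (w, t) \<in> K \<longrightarrow> v \<le> t + l \<bullet> w"
proof -
  define D where "D = fst ` K"
  from ri[folded D_def] obtain e where e: "e > 0" and eb: "ball 0 e \<inter> affine hull D \<subseteq> D"
    and D0: "0 \<in> D"
    unfolding mem_rel_interior_ball by blast
  have ahD: "affine hull D = span D"
    using D0 by (intro affine_hull_span_0) (simp add: hull_inc)
  define U where "U = {u. \<forall>d\<in>span D. u \<bullet> d = 0}"
  define K2 where "K2 = K + (\<lambda>u. (u, 0::real)) ` U"
  have cU: "convex U" unfolding U_def convex_def by (auto simp: inner_add_left)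
  have cK2: "convex K2" unfolding K2_def
    by (intro convex_set_plus cK convex_linear_image cU) (auto intro: linearI)
  have KK2: "K \<subseteq> K2"
  proof
    fix p assume "p \<in> K"
    moreover have "0 \<in> U" unfolding U_def by simp
    ultimately have "p + (0, 0) \<in> K2" unfolding K2_def by (intro set_plus_intro) auto
    then show "p \<in> K2" by (simp add: zero_prod_def[symmetric])
  qed
  have ball: "ball 0 e \<subseteq> fst ` K2"
  proof
    fix p :: 'a assume p: "p \<in> ball 0 e"
    obtain y z where y: "y \<in> span D" and z: "\<And>w. w \<in> span D \<Longrightarrow> orthogonal z w"
      and pyz: "p = y + z"
      using orthogonal_subspace_decomp_exists[of D p] by blast
    have yz: "y \<bullet> z = 0" using z[OF y] by (simp add: orthogonal_def inner_commute)
    have "(norm p)^2 = (norm y)^2 + (norm z)^2" unfolding pyz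
      by (rule norm_add_Pythagorean) (simp add: orthogonal_def yz)
    hence "(norm y)^2 \<le> (norm p)^2" by simp
    hence "norm y \<le> norm p" by (rule power2_le_imp_le) simp
    hence "y \<in> ball 0 e" using p by simp
    hence "y \<in> D" using eb y ahD by auto
    then obtain t where yt: "(y, t) \<in> K" unfolding D_def by force
    have zU: "z \<in> U" unfolding U_def using z by (simp add: orthogonal_def)
    have "(y, t) + (z, 0) \<in> K2" unfolding K2_def using yt zU by (intro set_plus_intro) auto
    then show "p \<in> fst ` K2" unfolding pyz by force
  qed
  have low2: "v \<le> t" if "(0, t) \<in> K2" for t
  proof -
    from that obtain w s u where ws: "(w, s) \<in> K" and u: "u \<in> U" and eq: "(0, t) = (w, s) + (u, 0)"
      unfolding K2_def set_plus_def by auto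
    have "w + u = 0" "s = t" using arg_cong[OF eq, of fst] arg_cong[OF eq, of snd] by simp_all
    hence wu: "u = - w" "s = t" by (simp_all add: add_eq_0_iff)
    have "w \<in> span D" using ws unfolding D_def by (intro span_base) force
    hence "u \<bullet> w = 0" using u unfolding U_def by blast
    hence "w \<bullet> w = 0" unfolding wu(1) by simp
    hence "w = 0" by simp
    with ws have "(0, s) \<in> K" by simp
    then show ?thesis using low wu(2) by blast
  qed
  have "\<exists>l. \<forall>w t. (w, t) \<in> K2 \<longrightarrow> v \<le> t + l \<bullet> w"
    by (rule sep_nonvertical_int[OF cK2 e ball low2])
  then obtain l where l: "\<forall>w t. (w, t) \<in> K2 \<longrightarrow> v \<le> t + l \<bullet> w" ..
  have "\<forall>w t. (w, t) \<in> K \<longrightarrow> v \<le> t + l \<bullet> w"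
  proof (intro allI impI)
    fix w t assume "(w, t) \<in> K"
    hence "(w, t) \<in> K2" using KK2 by (rule subsetD[rotated])
    thus "v \<le> t + l \<bullet> w" using l by simp
  qed
  thus ?thesis ..
qed

lemma farkas_affine:
  fixes J :: "'j set" and a :: "'j \<Rightarrow> 'x::euclidean_space" and c :: "'j \<Rightarrow> real"
  assumes fin: "finite J" and z0: "\<forall>j\<in>J. a j \<bullet> z0 \<le> c j"
    and impl: "\<And>z. \<forall>j\<in>J. a j \<bullet> z \<le> c j \<Longrightarrow> \<nu> \<bullet> z \<le> \<beta>"
  shows "\<exists>lam. (\<forall>j\<in>J. 0 \<le> lam j) \<and> \<nu> = (\<Sum>j\<in>J. lam j *\<^sub>R a j) \<and> (\<Sum>j\<in>J. lam j * c j) \<le> \<beta>"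
proof -
  define G where "G = (\<lambda>j. (a j, c j)) ` J \<union> {(0, 1)}"
  define Rep where "Rep = {p. \<exists>lam \<theta>. (\<forall>j\<in>J. 0 \<le> lam j) \<and> 0 \<le> \<theta> \<and>
                        p = (\<Sum>j\<in>J. lam j *\<^sub>R (a j, c j)) + \<theta> *\<^sub>R (0, 1)}"
  define H where "H = convex_cone hull G"
  have ccRep: "convex_cone Rep"
    unfolding convex_cone_iff
  proof (intro conjI ballI allI impI)
    show "0 \<in> Rep" unfolding Rep_def by (rule CollectI, rule exI[of _ "\<lambda>_. 0"], rule exI[of _ 0]) (simp add: zero_prod_def[symmetric])
  next
    fix x y assume "x \<in> Rep" "y \<in> Rep"
    then obtain l1 t1 l2 t2 where 1: "\<forall>j\<in>J. 0 \<le> l1 j" "0 \<le> t1" "x = (\<Sum>j\<in>J. l1 j *\<^sub>R (a j, c j)) + t1 *\<^sub>R (0, 1)"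
      and 2: "\<forall>j\<in>J. 0 \<le> l2 j" "0 \<le> t2" "y = (\<Sum>j\<in>J. l2 j *\<^sub>R (a j, c j)) + t2 *\<^sub>R (0, 1)"
      unfolding Rep_def by blast
    show "x + y \<in> Rep" unfolding Rep_def
      by (rule CollectI, rule exI[of _ "\<lambda>j. l1 j + l2 j"], rule exI[of _ "t1 + t2"])
        (use 1 2 in \<open>simp only: scaleR_add_left sum.distrib ac_simps, simp\<close>)
  next
    fix x and k :: real assume "x \<in> Rep" "0 \<le> k"
    then obtain l1 t1 where 1: "\<forall>j\<in>J. 0 \<le> l1 j" "0 \<le> t1" "x = (\<Sum>j\<in>J. l1 j *\<^sub>R (a j, c j)) + t1 *\<^sub>R (0, 1)"
      unfolding Rep_def by blast
    show "k *\<^sub>R x \<in> Rep" unfolding Rep_def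
      by (rule CollectI, rule exI[of _ "\<lambda>j. k * l1 j"], rule exI[of _ "k * t1"])
        (simp add: 1 \<open>0 \<le> k\<close> scaleR_add_right scaleR_sum_right mult.assoc)
  qed
  have GRep: "G \<subseteq> Rep"
  proof
    fix g assume "g \<in> G"
    then consider (a) j where "j \<in> J" "g = (a j, c j)" | (b) "g = (0, 1)" unfolding G_def by blast
    then show "g \<in> Rep"
    proof cases
      case (a j)
      have "(\<Sum>i\<in>J. (if i = j then 1 else 0) *\<^sub>R (a i, c i)) = (\<Sum>i\<in>J. if i = j then (a i, c i) else 0)"
        by (rule sum.cong) (auto simp: zero_prod_def)
      also have "\<dots> = (a j, c j)" using a fin by (simp add: sum.delta)
      finally have "g = (\<Sum>i\<in>J. (if i = j then 1 else 0) *\<^sub>R (a i, c i)) + 0 *\<^sub>R (0, 1)"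
        using a by simp
      then show ?thesis unfolding Rep_def
        by (intro CollectI exI[of _ "\<lambda>i. if i = j then 1 else 0"] exI[of _ 0]) auto
    next
      case b
      have "g = (\<Sum>i\<in>J. 0 *\<^sub>R (a i, c i)) + 1 *\<^sub>R (0, 1)" using b by (simp add: zero_prod_def[symmetric])
      then show ?thesis unfolding Rep_def
        by (intro CollectI exI[of _ "\<lambda>i. 0"] exI[of _ 1]) auto
    qed
  qed
  have HRep: "H \<subseteq> Rep" unfolding H_def by (rule hull_minimal[where S=convex_cone, OF GRep ccRep])
  have finG: "finite G" unfolding G_def using fin by simp
  have clH: "closed H" unfolding H_def
    by (rule polyhedron_imp_closed[OF polyhedron_convex_cone_hull[OF finG]])
  have cvH: "convex H" unfolding H_def by (rule convex_convex_cone_hull)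
  have ccH: "convex_cone H" unfolding H_def by (rule convex_cone_convex_cone_hull)
  have GH: "G \<subseteq> H" unfolding H_def by (rule hull_subset)
  have inH: "(\<nu>, \<beta>) \<in> H"
  proof (rule ccontr)
    assume "(\<nu>, \<beta>) \<notin> H"
    from separating_hyperplane_closed_point[OF cvH clH this] obtain q b where
      qb: "q \<bullet> (\<nu>, \<beta>) < b" and qH: "\<forall>x\<in>H. q \<bullet> x > b" by blast
    have b0: "b < 0" using qH convex_cone_contains_0[OF ccH] by force
    have pos: "q \<bullet> x \<ge> 0" if "x \<in> H" for x
    proof (rule ccontr)
      assume neg: "\<not> q \<bullet> x \<ge> 0"
      define k where "k = b / (q \<bullet> x)"
      have "k \<ge> 0" unfolding k_def using neg b0 by (simp add: divide_nonpos_neg)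
      hence "k *\<^sub>R x \<in> H" using ccH that by (simp add: convex_cone_scaleR)
      hence "q \<bullet> (k *\<^sub>R x) > b" using qH by blast
      moreover have "q \<bullet> (k *\<^sub>R x) = b" unfolding k_def using neg by simp
      ultimately show False by simp
    qed
    obtain d \<delta> where q: "q = (d, \<delta>)" by (cases q)
    have gen: "d \<bullet> a j + \<delta> * c j \<ge> 0" if "j \<in> J" for j
      using pos[of "(a j, c j)"] GH that unfolding G_def q by (auto simp: inner_Pair)
    have dpos: "\<delta> \<ge> 0" using pos[of "(0, 1)"] GH unfolding G_def q by (auto simp: inner_Pair)
    have neg: "d \<bullet> \<nu> + \<delta> * \<beta> < 0" using qb b0 unfolding q by (simp add: inner_Pair)
    show False
    proof (cases "\<delta> > 0")
      case True
      define z where "z = (- 1 / \<delta>) *\<^sub>R d"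
      have "\<forall>j\<in>J. a j \<bullet> z \<le> c j"
      proof
        fix j assume "j \<in> J"
        from gen[OF this] have "- (d \<bullet> a j) \<le> \<delta> * c j" by simp
        hence "- (d \<bullet> a j) / \<delta> \<le> c j" using True by (simp add: field_simps)
        then show "a j \<bullet> z \<le> c j" unfolding z_def by (simp add: inner_commute)
      qed
      from impl[OF this] have "- (d \<bullet> \<nu>) / \<delta> \<le> \<beta>" unfolding z_def by (simp add: inner_commute)
      hence "- (d \<bullet> \<nu>) \<le> \<delta> * \<beta>" using True by (simp add: field_simps)
      then show False using neg by simp
    next
      case False
      hence d0: "\<delta> = 0" using dpos by simp
      hence dn: "d \<bullet> \<nu> < 0" using neg by simp
      define s where "s = (\<bar>\<beta> - \<nu> \<bullet> z0\<bar> + 1) / (- (d \<bullet> \<nu>))"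
      have s0: "s \<ge> 0" unfolding s_def using dn by (intro divide_nonneg_pos) auto
      define z where "z = z0 - s *\<^sub>R d"
      have "\<forall>j\<in>J. a j \<bullet> z \<le> c j"
      proof
        fix j assume j: "j \<in> J"
        have "d \<bullet> a j \<ge> 0" using gen[OF j] d0 by simp
        hence "s * (a j \<bullet> d) \<ge> 0" using s0 by (simp add: inner_commute)
        moreover have "a j \<bullet> z0 \<le> c j" using z0 j by blast
        ultimately show "a j \<bullet> z \<le> c j" unfolding z_def by (simp add: inner_diff_right)
      qed
      from impl[OF this] have "\<nu> \<bullet> z0 - s * (\<nu> \<bullet> d) \<le> \<beta>" unfolding z_def by (simp add: inner_diff_right)
      moreover have "s * (\<nu> \<bullet> d) = - (\<bar>\<beta> - \<nu> \<bullet> z0\<bar> + 1)" unfolding s_def using dn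
        by (simp add: inner_commute)
      ultimately show False by linarith
    qed
  qed
  with HRep obtain l t where l: "\<forall>j\<in>J. 0 \<le> l j" "0 \<le> t"
     "(\<nu>, \<beta>) = (\<Sum>j\<in>J. l j *\<^sub>R (a j, c j)) + t *\<^sub>R (0, 1)"
    unfolding Rep_def by blast
  from arg_cong[OF l(3), of fst] have "\<nu> = (\<Sum>j\<in>J. l j *\<^sub>R a j)" by (simp add: fst_sum)
  moreover from arg_cong[OF l(3), of snd] have "\<beta> = (\<Sum>j\<in>J. l j * c j) + t" by (simp add: snd_sum)
  ultimately show ?thesis using l by (intro exI[of _ l]) auto
qed

lemma core_multiplier:
  fixes Dm :: "'x::euclidean_space set" and F :: "'x \<Rightarrow> real" and I :: "'i set"
    and a :: "'i \<Rightarrow> 'x" and c :: "'i \<Rightarrow> real"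
  assumes cD: "convex Dm" and cF: "convex_on Dm F" and fin: "finite I"
    and x0: "x0 \<in> rel_interior Dm" and x0P: "\<forall>i\<in>I. a i \<bullet> x0 \<le> c i"
    and low: "\<And>x. x \<in> Dm \<Longrightarrow> \<forall>i\<in>I. a i \<bullet> x \<le> c i \<Longrightarrow> v \<le> F x"
  shows "\<exists>lam. (\<forall>i\<in>I. 0 \<le> lam i) \<and> (\<forall>x\<in>Dm. v \<le> F x + (\<Sum>i\<in>I. lam i * (a i \<bullet> x - c i)))"
proof -
  define P where "P = {x. \<forall>i\<in>I. a i \<bullet> x \<le> c i}"
  define Aff where "Aff = affine hull Dm"
  define P' where "P' = P \<inter> Aff"
  define R where "R = rel_interior Dm"
  define Q where "Q = P \<inter> R"
  have "P = (\<Inter>i\<in>I. {x. a i \<bullet> x \<le> c i})" unfolding P_def by blast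
  hence cP: "convex P" by (simp add: convex_INT convex_halfspace_le)
  have aAff: "affine Aff" unfolding Aff_def by simp
  have cP': "convex P'" unfolding P'_def by (intro convex_Int cP affine_imp_convex aAff)
  have cR: "convex R" unfolding R_def by (rule convex_rel_interior[OF cD])
  have cQ: "convex Q" unfolding Q_def by (intro convex_Int cP cR)
  have RD: "R \<subseteq> Dm" unfolding R_def by (rule rel_interior_subset)
  have DAff: "Dm \<subseteq> Aff" unfolding Aff_def by (rule hull_subset)
  have x0Q: "x0 \<in> Q" unfolding Q_def P_def R_def using x0 x0P by blast
  hence "Q \<noteq> {}" by blast
  hence "rel_interior Q \<noteq> {}" using rel_interior_eq_empty[OF cQ] by blast
  then obtain x1 where x1: "x1 \<in> rel_interior Q" by blast
  have x1Q: "x1 \<in> Q" using x1 rel_interior_subset by blast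
  have x1R: "x1 \<in> R" and x1P: "x1 \<in> P" using x1Q unfolding Q_def by auto
  have QP': "Q \<subseteq> P'" unfolding Q_def P'_def using RD DAff by blast
  have x1P': "x1 \<in> P'" using x1Q QP' by blast
  have x1riP': "x1 \<in> rel_interior P'"
  proof -
    have "rel_interior R = R" unfolding R_def by (rule rel_interior_rel_interior[OF cD])
    with x1R have "x1 \<in> rel_interior R" by simp
    then obtain \<epsilon> where \<epsilon>: "\<epsilon> > 0" and \<epsilon>b: "ball x1 \<epsilon> \<inter> affine hull R \<subseteq> R"
      unfolding mem_rel_interior_ball by blast
    have ahR: "affine hull R = Aff" unfolding R_def Aff_def by (rule rel_interior_same_affine_hull[OF cD])
    have "\<forall>y\<in>P'. \<exists>e. e > 1 \<and> (1 - e) *\<^sub>R y + e *\<^sub>R x1 \<in> P'"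
    proof
      fix y assume y: "y \<in> P'"
      define n where "n = norm (y - x1)"
      define \<delta> where "\<delta> = \<epsilon> / (2 * (n + \<epsilon>))"
      have n0: "n \<ge> 0" unfolding n_def by simp
      have d0: "\<delta> > 0" unfolding \<delta>_def using \<epsilon> n0 by simp
      have d1: "\<delta> \<le> 1" unfolding \<delta>_def using \<epsilon> n0 by (simp add: field_simps)
      have dn: "\<delta> * n < \<epsilon>"
      proof -
        have "\<delta> * n = \<epsilon> * n / (2 * (n + \<epsilon>))" unfolding \<delta>_def by simp
        also have "\<dots> < \<epsilon>" using \<epsilon> n0 by (simp add: field_simps add_nonneg_pos)
        finally show ?thesis .
      qed
      define y' where "y' = (1 - \<delta>) *\<^sub>R x1 + \<delta> *\<^sub>R y"
      have yP: "y \<in> P" and yA: "y \<in> Aff" using y unfolding P'_def by auto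
      have x1A: "x1 \<in> Aff" using x1P' unfolding P'_def by auto
      have y'A: "y' \<in> Aff" unfolding y'_def by (rule mem_affine[OF aAff x1A yA]) simp
      have "dist x1 y' = norm (\<delta> *\<^sub>R (y - x1))" unfolding y'_def dist_norm
        by (simp add: algebra_simps norm_minus_commute)
      also have "\<dots> = \<delta> * n" unfolding n_def using d0 by simp
      finally have "y' \<in> ball x1 \<epsilon>" using dn by simp
      hence y'R: "y' \<in> R" using \<epsilon>b ahR y'A by blast
      have y'P: "y' \<in> P" unfolding y'_def using cP x1P yP d0 d1
        by (simp add: convex_alt)
      have y'Q: "y' \<in> Q" unfolding Q_def using y'R y'P by blast
      from x1 have "\<forall>x\<in>Q. \<exists>e. e > 1 \<and> (1 - e) *\<^sub>R x + e *\<^sub>R x1 \<in> Q"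
        using convex_rel_interior_iff[OF cQ \<open>Q \<noteq> {}\<close>] by blast
      then obtain e where e: "e > 1" "(1 - e) *\<^sub>R y' + e *\<^sub>R x1 \<in> Q" using y'Q by blast
      define e' where "e' = 1 + (e - 1) * \<delta>"
      have "e' > 1" unfolding e'_def using e d0 by simp
      moreover have "(1 - e) *\<^sub>R y' + e *\<^sub>R x1 = (1 - e') *\<^sub>R y + e' *\<^sub>R x1"
        unfolding y'_def e'_def by (simp add: algebra_simps)
      ultimately show "\<exists>e. e > 1 \<and> (1 - e) *\<^sub>R y + e *\<^sub>R x1 \<in> P'"
        using e QP' by (intro exI[of _ e']) auto
    qed
    then show ?thesis using convex_rel_interior_iff[OF cP'] x1P' by blast
  qed
  define K where "K = {(x - z, t) | x z t. x \<in> Dm \<and> z \<in> P' \<and> F x \<le> t}"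
  have cK: "convex K" unfolding convex_alt
  proof (intro ballI allI impI)
    fix p q and u :: real assume p: "p \<in> K" and q: "q \<in> K" and u: "0 \<le> u \<and> u \<le> 1"
    from p obtain x1 z1 t1 where 1: "p = (x1 - z1, t1)" "x1 \<in> Dm" "z1 \<in> P'" "F x1 \<le> t1"
      unfolding K_def by blast
    from q obtain x2 z2 t2 where 2: "q = (x2 - z2, t2)" "x2 \<in> Dm" "z2 \<in> P'" "F x2 \<le> t2"
      unfolding K_def by blast
    define x where "x = (1 - u) *\<^sub>R x1 + u *\<^sub>R x2"
    define z where "z = (1 - u) *\<^sub>R z1 + u *\<^sub>R z2"
    have xD: "x \<in> Dm" unfolding x_def using cD 1 2 u by (simp add: convex_alt)
    have zP: "z \<in> P'" unfolding z_def using cP' 1 2 u by (simp add: convex_alt)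
    have "F x \<le> (1 - u) * F x1 + u * F x2" unfolding x_def
      using convex_onD[OF cF] 1 2 u by blast
    also have "\<dots> \<le> (1 - u) * t1 + u * t2" using 1 2 u by (intro add_mono mult_left_mono) auto
    finally have Fx: "F x \<le> (1 - u) * t1 + u * t2" .
    have "(1 - u) *\<^sub>R p + u *\<^sub>R q = (x - z, (1 - u) * t1 + u * t2)"
      unfolding 1 2 x_def z_def by (simp add: algebra_simps)
    then show "(1 - u) *\<^sub>R p + u *\<^sub>R q \<in> K" unfolding K_def using xD zP Fx by blast
  qed
  have fstK: "fst ` K = Dm + (\<lambda>x. - x) ` P'"
  proof
    show "fst ` K \<subseteq> Dm + (\<lambda>x. - x) ` P'"
      unfolding K_def set_plus_def by force
  next
    show "Dm + (\<lambda>x. - x) ` P' \<subseteq> fst ` K"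
    proof
      fix w assume "w \<in> Dm + (\<lambda>x. - x) ` P'"
      then obtain x z where "x \<in> Dm" "z \<in> P'" "w = x + - z" unfolding set_plus_def by blast
      hence "(w, F x) \<in> K" unfolding K_def by force
      thus "w \<in> fst ` K" by force
    qed
  qed
  have "rel_interior (fst ` K) = R + (\<lambda>x. - x) ` rel_interior P'"
  proof -
    have "rel_interior (Dm + (\<lambda>x. - x) ` P') = rel_interior Dm + rel_interior ((\<lambda>x. - x) ` P')"
      by (rule rel_interior_sum[OF cD convex_negations[OF cP']])
    also have "rel_interior ((\<lambda>x. - x) ` P') = (\<lambda>x. - x) ` rel_interior P'"
      by (rule rel_interior_injective_linear_image)
        (auto intro: bounded_linear_minus[OF bounded_linear_ident] inj_onI)
    finally show ?thesis unfolding fstK R_def .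
  qed
  moreover have "0 \<in> R + (\<lambda>x. - x) ` rel_interior P'"
  proof -
    have "x1 + - x1 \<in> R + (\<lambda>x. - x) ` rel_interior P'"
      using x1R x1riP' by (intro set_plus_intro) auto
    thus ?thesis by simp
  qed
  ultimately have ri0: "0 \<in> rel_interior (fst ` K)" by simp
  have lowK: "v \<le> t" if "(0, t) \<in> K" for t
  proof -
    from that obtain x z where xz: "0 = x - z" "x \<in> Dm" "z \<in> P'" "F x \<le> t"
      unfolding K_def by blast
    hence "x = z" by simp
    hence "\<forall>i\<in>I. a i \<bullet> x \<le> c i" using xz unfolding P'_def P_def by blast
    hence "v \<le> F x" using low xz by blast
    thus ?thesis using xz by simp
  qed
  from sep_nonvertical_ri[OF cK ri0 lowK] obtain \<nu> where
    \<nu>: "\<forall>w t. (w, t) \<in> K \<longrightarrow> v \<le> t + \<nu> \<bullet> w" by blast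
  have nuz: "\<nu> \<bullet> z \<le> F x + \<nu> \<bullet> x - v" if "x \<in> Dm" "z \<in> P'" for x z
  proof -
    have "(x - z, F x) \<in> K" unfolding K_def using that by blast
    hence "v \<le> F x + \<nu> \<bullet> (x - z)" using \<nu> by blast
    thus ?thesis by (simp add: inner_diff_right)
  qed
  define \<beta> where "\<beta> = Sup ((\<lambda>z. \<nu> \<bullet> z) ` P')"
  have x1D: "x1 \<in> Dm" using x1R RD by blast
  have bdd: "bdd_above ((\<lambda>z. \<nu> \<bullet> z) ` P')"
    using nuz[OF x1D] by (intro bdd_aboveI[of _ "F x1 + \<nu> \<bullet> x1 - v"]) auto
  have neP': "P' \<noteq> {}" using x1P' by blast
  have zb: "\<nu> \<bullet> z \<le> \<beta>" if "z \<in> P'" for z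
    unfolding \<beta>_def using bdd that by (intro cSup_upper) auto
  have bx: "\<beta> \<le> F x + \<nu> \<bullet> x - v" if "x \<in> Dm" for x
    unfolding \<beta>_def using neP' nuz[OF that] by (intro cSup_least) auto
  have "polyhedron Aff" by (rule affine_imp_polyhedron[OF aAff])
  then obtain H where finH: "finite H" and AffH: "Aff = \<Inter> H"
    and Hh: "\<forall>h\<in>H. \<exists>a b. a \<noteq> 0 \<and> h = {x. a \<bullet> x \<le> b}"
    unfolding polyhedron_def by blast
  define hp where "hp h = (SOME p. h = {x. fst p \<bullet> x \<le> snd p})" for h :: "'x set"
  have hp: "h = {x. fst (hp h) \<bullet> x \<le> snd (hp h)}" if "h \<in> H" for h
  proof -
    from Hh that obtain a' b' where "h = {x. a' \<bullet> x \<le> b'}" by blast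
    hence "\<exists>p. h = {x. fst p \<bullet> x \<le> snd p}" by (intro exI[of _ "(a', b')"]) simp
    thus ?thesis unfolding hp_def by (rule someI_ex)
  qed
  define J where "J = Inl ` I \<union> Inr ` H"
  define aJ where "aJ = case_sum a (\<lambda>h. fst (hp h))"
  define cJ where "cJ = case_sum c (\<lambda>h. snd (hp h))"
  have finJ: "finite J" unfolding J_def using fin finH by simp
  have inJ: "(\<forall>j\<in>J. aJ j \<bullet> z \<le> cJ j) \<longleftrightarrow> z \<in> P'" for z
  proof -
    have "(\<forall>j\<in>J. aJ j \<bullet> z \<le> cJ j) \<longleftrightarrow> (\<forall>i\<in>I. a i \<bullet> z \<le> c i) \<and> (\<forall>h\<in>H. fst (hp h) \<bullet> z \<le> snd (hp h))"
      unfolding J_def aJ_def cJ_def by (simp add: ball_Un)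
    also have "(\<forall>h\<in>H. fst (hp h) \<bullet> z \<le> snd (hp h)) \<longleftrightarrow> z \<in> Aff"
    proof -
      have "(\<forall>h\<in>H. fst (hp h) \<bullet> z \<le> snd (hp h)) \<longleftrightarrow> (\<forall>h\<in>H. z \<in> h)"
      proof (intro ball_cong refl)
        fix h assume "h \<in> H"
        from hp[OF this] show "(fst (hp h) \<bullet> z \<le> snd (hp h)) = (z \<in> h)" by blast
      qed
      thus ?thesis unfolding AffH by blast
    qed
    finally show ?thesis unfolding P'_def P_def by blast
  qed
  from farkas_affine[OF finJ, of aJ x1 cJ \<nu> \<beta>] inJ x1P' zb
  obtain lamJ where lamJ: "\<forall>j\<in>J. 0 \<le> lamJ j" and nuS: "\<nu> = (\<Sum>j\<in>J. lamJ j *\<^sub>R aJ j)"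
    and cS: "(\<Sum>j\<in>J. lamJ j * cJ j) \<le> \<beta>" by blast
  show ?thesis
  proof (intro exI[of _ "\<lambda>i. lamJ (Inl i)"] conjI ballI)
    fix i assume "i \<in> I" thus "0 \<le> lamJ (Inl i)" using lamJ unfolding J_def by blast
  next
    fix x assume xD: "x \<in> Dm"
    have xA: "x \<in> Aff" using xD DAff by blast
    have v1: "v \<le> F x + (\<nu> \<bullet> x - (\<Sum>j\<in>J. lamJ j * cJ j))" using bx[OF xD] cS by simp
    have "\<nu> \<bullet> x - (\<Sum>j\<in>J. lamJ j * cJ j) = (\<Sum>j\<in>J. lamJ j * (aJ j \<bullet> x - cJ j))"
      unfolding nuS by (simp add: inner_sum_left sum_subtractf right_diff_distrib)
    also have "(\<Sum>j\<in>J. lamJ j * (aJ j \<bullet> x - cJ j)) =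
       (\<Sum>j\<in>Inl ` I. lamJ j * (aJ j \<bullet> x - cJ j)) + (\<Sum>j\<in>Inr ` H. lamJ j * (aJ j \<bullet> x - cJ j))"
      unfolding J_def using fin finH by (intro sum.union_disjoint) auto
    also have "(\<Sum>j\<in>Inl ` I. lamJ j * (aJ j \<bullet> x - cJ j)) = (\<Sum>i\<in>I. lamJ (Inl i) * (a i \<bullet> x - c i))"
      by (subst sum.reindex) (auto simp: aJ_def cJ_def)
    also have "(\<Sum>j\<in>Inr ` H. lamJ j * (aJ j \<bullet> x - cJ j)) \<le> 0"
    proof (rule sum_nonpos)
      fix j :: "'i + 'x set" assume j: "j \<in> Inr ` H"
      then obtain h where h: "h \<in> H" "j = Inr h" by blast
      have "x \<in> h" using xA h unfolding AffH by blast
      hence "aJ j \<bullet> x - cJ j \<le> 0" using hp[OF h(1)] h unfolding aJ_def cJ_def by auto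
      moreover have "0 \<le> lamJ j" using lamJ j unfolding J_def by blast
      ultimately show "lamJ j * (aJ j \<bullet> x - cJ j) \<le> 0" by (simp add: mult_nonneg_nonpos)
    qed
    finally have "\<nu> \<bullet> x - (\<Sum>j\<in>J. lamJ j * cJ j) \<le> (\<Sum>i\<in>I. lamJ (Inl i) * (a i \<bullet> x - c i))"
      by simp
    with v1 show "v \<le> F x + (\<Sum>i\<in>I. lamJ (Inl i) * (a i \<bullet> x - c i))" by linarith
  qed
qed

lemma proper_fin:
  assumes "proper_fun f" "x \<in> edom f"
  shows "f x = ereal (real_of_ereal (f x))"
proof -
  have "f x \<noteq> - \<infinity>" "f x \<noteq> \<infinity>" using assms unfolding proper_fun_def edom_def by auto
  thus ?thesis by (cases "f x") auto
qed

lemma edom_fst_epi: "edom f = fst ` epigraph f"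
proof
  show "edom f \<subseteq> fst ` epigraph f"
  proof
    fix x assume "x \<in> edom f"
    hence "f x < \<infinity>" unfolding edom_def by simp
    then obtain t where "f x \<le> ereal t"
      by (cases "f x") auto
    hence "(x, t) \<in> epigraph f" unfolding epigraph_def by simp
    thus "x \<in> fst ` epigraph f" by force
  qed
  show "fst ` epigraph f \<subseteq> edom f"
    unfolding epigraph_def edom_def by (force intro: le_less_trans)
qed

lemma convex_edom: "convex_fun f \<Longrightarrow> convex (edom f)"
  unfolding edom_fst_epi convex_fun_def by (rule convex_linear_image) (auto intro: linear_fst)

lemma convex_on_real:
  assumes pf: "proper_fun f" and cf: "convex_fun f"
  shows "convex_on (edom f) (\<lambda>x. real_of_ereal (f x))"
proof (rule convex_onI)
  show "convex (edom f)" by (rule convex_edom[OF cf])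
  fix t :: real and x y assume t: "0 < t" "t < 1" and x: "x \<in> edom f" and y: "y \<in> edom f"
  have ex: "(x, real_of_ereal (f x)) \<in> epigraph f" unfolding epigraph_def
    using proper_fin[OF pf x] by simp
  have ey: "(y, real_of_ereal (f y)) \<in> epigraph f" unfolding epigraph_def
    using proper_fin[OF pf y] by simp
  have "(1 - t) *\<^sub>R (x, real_of_ereal (f x)) + t *\<^sub>R (y, real_of_ereal (f y)) \<in> epigraph f"
    using cf ex ey t unfolding convex_fun_def convex_alt by (meson less_eq_real_def)
  hence le: "f ((1 - t) *\<^sub>R x + t *\<^sub>R y) \<le> ereal ((1 - t) * real_of_ereal (f x) + t * real_of_ereal (f y))"
    unfolding epigraph_def by (simp add: algebra_simps)
  hence "(1 - t) *\<^sub>R x + t *\<^sub>R y \<in> edom f" unfolding edom_def by (auto intro: le_less_trans)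
  from proper_fin[OF pf this] le
  show "real_of_ereal (f ((1 - t) *\<^sub>R x + t *\<^sub>R y)) \<le> (1 - t) * real_of_ereal (f x) + t * real_of_ereal (f y)"
    by (metis ereal_less_eq(3))
qed

lemma convex_on_fst_UNIV:
  assumes "convex_on D \<phi>"
  shows "convex_on (D \<times> (UNIV :: 'b::real_vector set)) (\<lambda>p. \<phi> (fst p))"
proof (rule convex_onI)
  show "convex (D \<times> (UNIV :: 'b set))" using assms unfolding convex_on_def
    by (intro convex_Times) auto
  fix t :: real and x y assume "0 < t" "t < 1" "x \<in> D \<times> (UNIV :: 'b set)" "y \<in> D \<times> (UNIV :: 'b set)"
  thus "\<phi> (fst ((1 - t) *\<^sub>R x + t *\<^sub>R y)) \<le> (1 - t) * \<phi> (fst x) + t * \<phi> (fst y)"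
    using convex_onD[OF assms, of t "fst x" "fst y"] by auto
qed

lemma convex_on_snd_UNIV: "convex_on (UNIV :: ('a::real_vector \<times> real) set) snd"
  by (rule convex_onI) auto

lemma convex_on_sep:
  assumes "convex_on D1 \<phi>1" "convex_on D2 \<phi>2"
  shows "convex_on (D1 \<times> D2) (\<lambda>p. \<phi>1 (fst p) + \<phi>2 (snd p))"
proof (rule convex_onI)
  show "convex (D1 \<times> D2)" using assms unfolding convex_on_def by (intro convex_Times) auto
  fix t :: real and x y assume t: "0 < t" "t < 1" and xy: "x \<in> D1 \<times> D2" "y \<in> D1 \<times> D2"
  have 1: "\<phi>1 (fst ((1 - t) *\<^sub>R x + t *\<^sub>R y)) \<le> (1 - t) * \<phi>1 (fst x) + t * \<phi>1 (fst y)"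
    using convex_onD[OF assms(1), of t "fst x" "fst y"] t xy by auto
  have 2: "\<phi>2 (snd ((1 - t) *\<^sub>R x + t *\<^sub>R y)) \<le> (1 - t) * \<phi>2 (snd x) + t * \<phi>2 (snd y)"
    using convex_onD[OF assms(2), of t "snd x" "snd y"] t xy by auto
  show "\<phi>1 (fst ((1 - t) *\<^sub>R x + t *\<^sub>R y)) + \<phi>2 (snd ((1 - t) *\<^sub>R x + t *\<^sub>R y))
        \<le> (1 - t) * (\<phi>1 (fst x) + \<phi>2 (snd x)) + t * (\<phi>1 (fst y) + \<phi>2 (snd y))"
    using add_mono[OF 1 2] by (simp add: algebra_simps)
qed

lemma mv_component: "(A *v x) $ i = (A $ i) \<bullet> (x :: real^'n)"
  by (simp add: matrix_vector_mult_def inner_vec_def mult.commute)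

definition hsp :: "'a::real_inner set \<Rightarrow> 'a \<times> real" where
  "hsp h = (SOME p. h = {x. fst p \<bullet> x \<le> snd p})"

lemma hsp: "\<exists>a b. h = {x. a \<bullet> x \<le> b} \<Longrightarrow> h = {x. fst (hsp h) \<bullet> x \<le> snd (hsp h)}"
proof -
  assume "\<exists>a b. h = {x. a \<bullet> x \<le> b}"
  then obtain a b where "h = {x. a \<bullet> x \<le> b}" by blast
  hence "\<exists>p. h = {x. fst p \<bullet> x \<le> snd p}" by (intro exI[of _ "(a, b)"]) simp
  thus ?thesis unfolding hsp_def by (rule someI_ex)
qed

definition hsets :: "'a::euclidean_space set \<Rightarrow> 'a set set" where
  "hsets E = (SOME H. finite H \<and> E = \<Inter>H \<and> (\<forall>h\<in>H. \<exists>a b. a \<noteq> 0 \<and> h = {x. a \<bullet> x \<le> b}))"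

lemma hsets:
  assumes "polyhedron E"
  shows "finite (hsets E)" "E = \<Inter>(hsets E)" "\<And>h. h \<in> hsets E \<Longrightarrow> h = {x. fst (hsp h) \<bullet> x \<le> snd (hsp h)}"
proof -
  have "finite (hsets E) \<and> E = \<Inter>(hsets E) \<and> (\<forall>h\<in>hsets E. \<exists>a b. a \<noteq> 0 \<and> h = {x. a \<bullet> x \<le> b})"
    using assms unfolding polyhedron_def hsets_def by (rule someI_ex)
  thus "finite (hsets E)" "E = \<Inter>(hsets E)" by auto
  fix h assume "h \<in> hsets E"
  with \<open>finite (hsets E) \<and> _\<close> show "h = {x. fst (hsp h) \<bullet> x \<le> snd (hsp h)}"
    by (intro hsp) blast
qed

datatype ('a, 'b, 'c, 'd) cidx = CF 'a | CG 'b | CA 'c bool | CB 'd bool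

definition valS :: "(real^'n \<Rightarrow> ereal) \<Rightarrow> (real^'m \<Rightarrow> ereal) \<Rightarrow> real^'n^'m \<Rightarrow> real^'n^'r
                  \<Rightarrow> real^'r \<Rightarrow> 'r set \<Rightarrow> real" where
  "valS f g A B b S = Inf ((\<lambda>x. real_of_ereal (f x) + real_of_ereal (g (A *v x))) `
      {x. x \<in> edom f \<and> A *v x \<in> edom g \<and> (\<forall>i\<in>S. (B *v x) $ i = b $ i)})"

definition sg :: "bool \<Rightarrow> real" where "sg bo = (if bo then 1 else -1)"

lemma strong_dual:
  fixes f :: "real^'n \<Rightarrow> ereal" and g :: "real^'m \<Rightarrow> ereal"
    and A :: "real^'n^'m" and B :: "real^'n^'r" and b :: "real^'r" and S :: "'r set"
  assumes pf: "proper_fun f" and cf: "convex_fun f" and pg: "proper_fun g" and cg: "convex_fun g"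
    and bdd: "\<forall>x. ereal c \<le> f x + g (A *v x)"
    and x0f: "if polyhedral_fun f then x0 \<in> edom f else x0 \<in> rel_interior (edom f)"
    and x0g: "if polyhedral_fun g then A *v x0 \<in> edom g else A *v x0 \<in> rel_interior (edom g)"
    and x0b: "B *v x0 = b"
  shows "\<exists>y z. (\<forall>i. i \<notin> S \<longrightarrow> z $ i = 0) \<and> Xi f g A B b y z \<le> ereal (- valS f g A B b S)"
proof -
  define fr where "fr x = real_of_ereal (f x)" for x
  define gr where "gr u = real_of_ereal (g u)" for u
  define FS where "FS = {x. x \<in> edom f \<and> A *v x \<in> edom g \<and> (\<forall>i\<in>S. (B *v x) $ i = b $ i)}"
  define val where "val = valS f g A B b S"
  have val_def': "val = Inf ((\<lambda>x. fr x + gr (A *v x)) ` FS)"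
    unfolding val_def valS_def fr_def gr_def FS_def ..
  have x0df: "x0 \<in> edom f" using x0f rel_interior_subset by (auto split: if_splits)
  have x0dg: "A *v x0 \<in> edom g" using x0g rel_interior_subset by (auto split: if_splits)
  have x0FS: "x0 \<in> FS" unfolding FS_def using x0df x0dg x0b by simp
  have ffin: "f x = ereal (fr x)" if "x \<in> edom f" for x unfolding fr_def by (rule proper_fin[OF pf that])
  have gfin: "g u = ereal (gr u)" if "u \<in> edom g" for u unfolding gr_def by (rule proper_fin[OF pg that])
  have bddF: "bdd_below ((\<lambda>x. fr x + gr (A *v x)) ` FS)"
  proof (rule bdd_belowI[of _ c])
    fix r assume "r \<in> (\<lambda>x. fr x + gr (A *v x)) ` FS"
    then obtain x where x: "x \<in> FS" "r = fr x + gr (A *v x)" by blast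
    have "ereal c \<le> f x + g (A *v x)" using bdd by blast
    also have "\<dots> = ereal (fr x + gr (A *v x))" using x ffin gfin unfolding FS_def by simp
    finally show "c \<le> r" using x by simp
  qed
  have lowFS: "val \<le> fr x + gr (A *v x)" if "x \<in> FS" for x
    unfolding val_def' using bddF that by (intro cInf_lower) auto
  define pF where "pF = polyhedral_fun f"
  define pG where "pG = polyhedral_fun g"
  define Hf where "Hf = (if pF then hsets (epigraph f) else {})"
  define Hg where "Hg = (if pG then hsets (epigraph g) else {})"
  have finHf: "finite Hf" unfolding Hf_def using hsets(1) unfolding pF_def polyhedral_fun_def by auto
  have finHg: "finite Hg" unfolding Hg_def using hsets(1) unfolding pG_def polyhedral_fun_def by auto
  have epiHf: "epigraph f = \<Inter>Hf" if pF using that hsets(2) unfolding Hf_def pF_def polyhedral_fun_def by auto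
  have epiHg: "epigraph g = \<Inter>Hg" if pG using that hsets(2) unfolding Hg_def pG_def polyhedral_fun_def by auto
  have hHf: "h = {x. fst (hsp h) \<bullet> x \<le> snd (hsp h)}" if "h \<in> Hf" for h
    using that hsets(3) unfolding Hf_def pF_def polyhedral_fun_def by (auto split: if_splits)
  have hHg: "h = {x. fst (hsp h) \<bullet> x \<le> snd (hsp h)}" if "h \<in> Hg" for h
    using that hsets(3) unfolding Hg_def pG_def polyhedral_fun_def by (auto split: if_splits)
  have HfE: "Hf = {}" if "\<not> pF" using that unfolding Hf_def by simp
  have HgE: "Hg = {}" if "\<not> pG" using that unfolding Hg_def by simp
  define Df :: "((real^'n) \<times> real) set" where "Df = (if pF then UNIV else edom f \<times> UNIV)"
  define Dg :: "((real^'m) \<times> real) set" where "Dg = (if pG then UNIV else edom g \<times> UNIV)"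
  define \<phi>f where "\<phi>f p = (if pF then snd p else fr (fst p))" for p :: "(real^'n) \<times> real"
  define \<phi>g where "\<phi>g p = (if pG then snd p else gr (fst p))" for p :: "(real^'m) \<times> real"
  define Dm where "Dm = Df \<times> Dg"
  define F where "F q = \<phi>f (fst q) + \<phi>g (snd q)" for q
  have cvf: "convex_on Df \<phi>f"
  proof (cases pF)
    case True thus ?thesis unfolding Df_def \<phi>f_def by (simp add: convex_on_snd_UNIV)
  next
    case False
    have "convex_on (edom f \<times> (UNIV :: real set)) (\<lambda>p. fr (fst p))"
      unfolding fr_def by (rule convex_on_fst_UNIV[OF convex_on_real[OF pf cf]])
    thus ?thesis using False unfolding Df_def \<phi>f_def by simp
  qed
  have cvg: "convex_on Dg \<phi>g"
  proof (cases pG)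
    case True thus ?thesis unfolding Dg_def \<phi>g_def by (simp add: convex_on_snd_UNIV)
  next
    case False
    have "convex_on (edom g \<times> (UNIV :: real set)) (\<lambda>p. gr (fst p))"
      unfolding gr_def by (rule convex_on_fst_UNIV[OF convex_on_real[OF pg cg]])
    thus ?thesis using False unfolding Dg_def \<phi>g_def by simp
  qed
  have cF: "convex_on Dm F" unfolding Dm_def F_def by (rule convex_on_sep[OF cvf cvg])
  have cD: "convex Dm" using cF unfolding convex_on_def by blast
  have cDf: "convex Df" using cvf unfolding convex_on_def by blast
  have cDg: "convex Dg" using cvg unfolding convex_on_def by blast
  define I :: "(((real^'n) \<times> real) set, ((real^'m) \<times> real) set, 'm, 'r) cidx set" where "I = CF ` Hf \<union> CG ` Hg \<union> (range (\<lambda>i. CA i True) \<union> range (\<lambda>i. CA i False)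
                       \<union> (\<lambda>i. CB i True) ` S \<union> (\<lambda>i. CB i False) ` S)"
  define aa :: "(((real^'n) \<times> real) set, ((real^'m) \<times> real) set, 'm, 'r) cidx \<Rightarrow> ((real^'n) \<times> real) \<times> ((real^'m) \<times> real)" where
    "aa k = (case k of CF h \<Rightarrow> (fst (hsp h), 0) | CG h \<Rightarrow> (0, fst (hsp h))
             | CA i bo \<Rightarrow> sg bo *\<^sub>R ((- (A $ i), 0), (axis i 1, 0))
             | CB i bo \<Rightarrow> sg bo *\<^sub>R ((B $ i, 0), 0))" for k
  define cc :: "(((real^'n) \<times> real) set, ((real^'m) \<times> real) set, 'm, 'r) cidx \<Rightarrow> real" where
    "cc k = (case k of CF h \<Rightarrow> snd (hsp h) | CG h \<Rightarrow> snd (hsp h)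
             | CA i bo \<Rightarrow> 0 | CB i bo \<Rightarrow> sg bo * b $ i)" for k
  have aaCF: "aa (CF h) \<bullet> q = fst (hsp h) \<bullet> fst q" for h q unfolding aa_def by (cases q) (simp add: inner_Pair)
  have aaCG: "aa (CG h) \<bullet> q = fst (hsp h) \<bullet> snd q" for h q unfolding aa_def by (cases q) (simp add: inner_Pair)
  have aaCA: "aa (CA i bo) \<bullet> q = sg bo * ((fst (snd q)) $ i - (A *v fst (fst q)) $ i)" for i bo q
    unfolding aa_def by (cases q) (auto simp: inner_Pair inner_axis' mv_component algebra_simps)
  have aaCB: "aa (CB i bo) \<bullet> q = sg bo * (B *v fst (fst q)) $ i" for i bo q
    unfolding aa_def by (cases q) (auto simp: inner_Pair mv_component)
  have finI: "finite I" unfolding I_def using finHf finHg by (auto intro!: finite_imageI)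
  define q0 where "q0 = ((x0, fr x0), (A *v x0, gr (A *v x0)))"
  have cU: "convex (UNIV :: real set)" by simp
  have riDf: "rel_interior Df = (if pF then UNIV else rel_interior (edom f) \<times> UNIV)"
    unfolding Df_def using rel_interior_Times[OF convex_edom[OF cf] cU] by simp
  have riDg: "rel_interior Dg = (if pG then UNIV else rel_interior (edom g) \<times> UNIV)"
    unfolding Dg_def using rel_interior_Times[OF convex_edom[OF cg] cU] by simp
  have q0ri: "q0 \<in> rel_interior Dm" unfolding Dm_def rel_interior_Times[OF cDf cDg] q0_def riDf riDg
    using x0f x0g unfolding pF_def pG_def by (auto split: if_splits)
  have fpart: "x \<in> edom f \<and> fr x \<le> \<phi>f (x, t)"
    if "(x, t) \<in> Df" "\<forall>h\<in>Hf. fst (hsp h) \<bullet> (x, t) \<le> snd (hsp h)" for x t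
  proof (cases pF)
    case True
    have "(x, t) \<in> \<Inter>Hf" using that(2) hHf by blast
    hence "f x \<le> ereal t" using epiHf[OF True] unfolding epigraph_def by blast
    hence xd: "x \<in> edom f" unfolding edom_def by (auto intro: le_less_trans)
    with \<open>f x \<le> ereal t\<close> have "fr x \<le> t" using ffin[OF xd] by simp
    thus ?thesis using xd True unfolding \<phi>f_def by simp
  next
    case False thus ?thesis using that(1) unfolding Df_def \<phi>f_def by simp
  qed
  have gpart: "u \<in> edom g \<and> gr u \<le> \<phi>g (u, s)"
    if "(u, s) \<in> Dg" "\<forall>h\<in>Hg. fst (hsp h) \<bullet> (u, s) \<le> snd (hsp h)" for u s
  proof (cases pG)
    case True
    have "(u, s) \<in> \<Inter>Hg" using that(2) hHg by blast
    hence "g u \<le> ereal s" using epiHg[OF True] unfolding epigraph_def by blast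
    hence ud: "u \<in> edom g" unfolding edom_def by (auto intro: le_less_trans)
    with \<open>g u \<le> ereal s\<close> have "gr u \<le> s" using gfin[OF ud] by simp
    thus ?thesis using ud True unfolding \<phi>g_def by simp
  next
    case False thus ?thesis using that(1) unfolding Dg_def \<phi>g_def by simp
  qed
  have sgT: "sg True = 1" and sgF: "sg False = -1" unfolding sg_def by simp_all
  have q0P: "\<forall>k\<in>I. aa k \<bullet> q0 \<le> cc k"
  proof
    fix k assume k: "k \<in> I"
    show "aa k \<bullet> q0 \<le> cc k"
    proof (cases k)
      case (CF h)
      hence h: "h \<in> Hf" using k unfolding I_def by auto
      hence pT: pF using HfE by blast
      have "(x0, fr x0) \<in> epigraph f" unfolding epigraph_def using ffin[OF x0df] by simp
      hence "(x0, fr x0) \<in> h" using epiHf[OF pT] h by blast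
      hence "fst (hsp h) \<bullet> (x0, fr x0) \<le> snd (hsp h)" using hHf[OF h] by blast
      thus ?thesis unfolding CF aaCF q0_def cc_def by simp
    next
      case (CG h)
      hence h: "h \<in> Hg" using k unfolding I_def by auto
      hence pT: pG using HgE by blast
      have "(A *v x0, gr (A *v x0)) \<in> epigraph g" unfolding epigraph_def using gfin[OF x0dg] by simp
      hence "(A *v x0, gr (A *v x0)) \<in> h" using epiHg[OF pT] h by blast
      hence "fst (hsp h) \<bullet> (A *v x0, gr (A *v x0)) \<le> snd (hsp h)" using hHg[OF h] by blast
      thus ?thesis unfolding CG aaCG q0_def cc_def by simp
    next
      case (CA i bo)
      thus ?thesis unfolding CA aaCA q0_def cc_def by simp
    next
      case (CB i bo)
      thus ?thesis unfolding CB aaCB q0_def cc_def using x0b by simp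
    qed
  qed
  have lowq: "val \<le> F q" if q: "q \<in> Dm" and qc: "\<forall>k\<in>I. aa k \<bullet> q \<le> cc k" for q
  proof -
    obtain x t u s where qq: "q = ((x, t), (u, s))" by (metis prod.collapse)
    have xt: "(x, t) \<in> Df" and us: "(u, s) \<in> Dg" using q unfolding qq Dm_def by auto
    have "\<forall>h\<in>Hf. fst (hsp h) \<bullet> (x, t) \<le> snd (hsp h)"
    proof
      fix h assume "h \<in> Hf"
      hence "CF h \<in> I" unfolding I_def by blast
      hence "aa (CF h) \<bullet> q \<le> cc (CF h)" using qc by blast
      thus "fst (hsp h) \<bullet> (x, t) \<le> snd (hsp h)" unfolding aaCF cc_def qq by simp
    qed
    from fpart[OF xt this] have fx: "x \<in> edom f" "fr x \<le> \<phi>f (x, t)" by auto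
    have "\<forall>h\<in>Hg. fst (hsp h) \<bullet> (u, s) \<le> snd (hsp h)"
    proof
      fix h assume "h \<in> Hg"
      hence "CG h \<in> I" unfolding I_def by blast
      hence "aa (CG h) \<bullet> q \<le> cc (CG h)" using qc by blast
      thus "fst (hsp h) \<bullet> (u, s) \<le> snd (hsp h)" unfolding aaCG cc_def qq by simp
    qed
    from gpart[OF us this] have gu: "u \<in> edom g" "gr u \<le> \<phi>g (u, s)" by auto
    have uA: "u = A *v x"
    proof (subst vec_eq_iff, rule allI)
      fix i
      have "CA i True \<in> I" "CA i False \<in> I" unfolding I_def by auto
      hence "aa (CA i True) \<bullet> q \<le> cc (CA i True)" "aa (CA i False) \<bullet> q \<le> cc (CA i False)"
        using qc by blast+
      thus "u $ i = (A *v x) $ i" unfolding aaCA cc_def qq by (simp add: sgT sgF)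
    qed
    have Bx: "\<forall>i\<in>S. (B *v x) $ i = b $ i"
    proof
      fix i assume "i \<in> S"
      hence "CB i True \<in> I" "CB i False \<in> I" unfolding I_def by auto
      hence "aa (CB i True) \<bullet> q \<le> cc (CB i True)" "aa (CB i False) \<bullet> q \<le> cc (CB i False)"
        using qc by blast+
      thus "(B *v x) $ i = b $ i" unfolding aaCB cc_def qq by (simp add: sgT sgF)
    qed
    have "x \<in> FS" unfolding FS_def using fx gu uA Bx by simp
    hence "val \<le> fr x + gr (A *v x)" by (rule lowFS)
    also have "\<dots> \<le> F q" unfolding F_def qq using fx gu uA by simp
    finally show ?thesis .
  qed
  from core_multiplier[OF cD cF finI q0ri q0P lowq]
  obtain lam where lam0: "\<forall>k\<in>I. 0 \<le> lam k"
    and lamq: "\<forall>q\<in>Dm. val \<le> F q + (\<Sum>k\<in>I. lam k * (aa k \<bullet> q - cc k))" by blast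
  define y :: "real^'m" where "y = (\<chi> i. lam (CA i False) - lam (CA i True))"
  define z :: "real^'r" where "z = (\<chi> i. if i \<in> S then lam (CB i True) - lam (CB i False) else 0)"
  have zS: "\<forall>i. i \<notin> S \<longrightarrow> z $ i = 0" unfolding z_def by simp
  have key: "val \<le> fr x + gr u + (y \<bullet> (A *v x - u) + z \<bullet> (B *v x - b))"
    if x: "x \<in> edom f" and u: "u \<in> edom g" for x u
  proof -
    define q where "q = ((x, fr x), (u, gr u))"
    have qD: "q \<in> Dm" unfolding q_def Dm_def Df_def Dg_def using x u by auto
    have Fq: "F q = fr x + gr u" unfolding q_def F_def \<phi>f_def \<phi>g_def by simp
    define T where "T k = lam k * (aa k \<bullet> q - cc k)" for k
    define I1 :: "(((real^'n) \<times> real) set, ((real^'m) \<times> real) set, 'm, 'r) cidx set" where "I1 = CF ` Hf \<union> CG ` Hg"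
    define R1 :: "(((real^'n) \<times> real) set, ((real^'m) \<times> real) set, 'm, 'r) cidx set" where "R1 = range (\<lambda>i. CA i True)"
    define R2 :: "(((real^'n) \<times> real) set, ((real^'m) \<times> real) set, 'm, 'r) cidx set" where "R2 = range (\<lambda>i. CA i False)"
    define R3 :: "(((real^'n) \<times> real) set, ((real^'m) \<times> real) set, 'm, 'r) cidx set" where "R3 = (\<lambda>i. CB i True) ` S"
    define R4 :: "(((real^'n) \<times> real) set, ((real^'m) \<times> real) set, 'm, 'r) cidx set" where "R4 = (\<lambda>i. CB i False) ` S"
    have Ieq: "I = I1 \<union> (((R1 \<union> R2) \<union> R3) \<union> R4)" unfolding I_def I1_def R1_def R2_def R3_def R4_def
      by blast
    have finS: "finite S" by simp
    have fI1: "finite I1" unfolding I1_def using finHf finHg by simp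
    have fR: "finite R1" "finite R2" "finite R3" "finite R4" unfolding R1_def R2_def R3_def R4_def
      by (auto intro!: finite_imageI)
    have "sum T I = sum T I1 + sum T (((R1 \<union> R2) \<union> R3) \<union> R4)" unfolding Ieq
      using fI1 fR by (intro sum.union_disjoint) (auto simp: I1_def R1_def R2_def R3_def R4_def)
    also have "sum T (((R1 \<union> R2) \<union> R3) \<union> R4) = sum T ((R1 \<union> R2) \<union> R3) + sum T R4"
      using fR by (intro sum.union_disjoint) (auto simp: R1_def R2_def R3_def R4_def)
    also have "sum T ((R1 \<union> R2) \<union> R3) = sum T (R1 \<union> R2) + sum T R3"
      using fR by (intro sum.union_disjoint) (auto simp: R1_def R2_def R3_def)
    also have "sum T (R1 \<union> R2) = sum T R1 + sum T R2"
      using fR by (intro sum.union_disjoint) (auto simp: R1_def R2_def)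
    finally have sumI: "sum T I = sum T I1 + (sum T R1 + sum T R2 + sum T R3 + sum T R4)" .
    have I1n: "sum T I1 \<le> 0"
    proof (rule sum_nonpos)
      fix k assume k: "k \<in> I1"
      hence kI: "k \<in> I" unfolding I1_def I_def by blast
      have "aa k \<bullet> q \<le> cc k"
      proof (cases k)
        case (CF h)
        hence h: "h \<in> Hf" using k unfolding I1_def by auto
        hence pT: pF using HfE by blast
        have "(x, fr x) \<in> epigraph f" unfolding epigraph_def using ffin[OF x] by simp
        hence "(x, fr x) \<in> h" using epiHf[OF pT] h by blast
        thus ?thesis using hHf[OF h] unfolding CF aaCF q_def cc_def by auto
      next
        case (CG h)
        hence h: "h \<in> Hg" using k unfolding I1_def by auto
        hence pT: pG using HgE by blast
        have "(u, gr u) \<in> epigraph g" unfolding epigraph_def using gfin[OF u] by simp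
        hence "(u, gr u) \<in> h" using epiHg[OF pT] h by blast
        thus ?thesis using hHg[OF h] unfolding CG aaCG q_def cc_def by auto
      next
        case (CA i bo) thus ?thesis using k unfolding I1_def by auto
      next
        case (CB i bo) thus ?thesis using k unfolding I1_def by auto
      qed
      moreover have "0 \<le> lam k" using lam0 kI by blast
      ultimately show "T k \<le> 0" unfolding T_def by (simp add: mult_nonneg_nonpos)
    qed
    have s1: "sum T R1 = (\<Sum>i\<in>UNIV. lam (CA i True) * (u $ i - (A *v x) $ i))"
      unfolding R1_def by (subst sum.reindex) (auto intro: inj_onI simp: T_def aaCA q_def cc_def sgT)
    have s2: "sum T R2 = (\<Sum>i\<in>UNIV. - (lam (CA i False) * (u $ i - (A *v x) $ i)))"
      unfolding R2_def by (subst sum.reindex) (auto intro: inj_onI simp: T_def aaCA q_def cc_def sgF algebra_simps)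
    have s3: "sum T R3 = (\<Sum>i\<in>S. lam (CB i True) * ((B *v x) $ i - b $ i))"
      unfolding R3_def by (subst sum.reindex) (auto intro: inj_onI simp: T_def aaCB q_def cc_def sgT)
    have s4: "sum T R4 = (\<Sum>i\<in>S. - (lam (CB i False) * ((B *v x) $ i - b $ i)))"
      unfolding R4_def by (subst sum.reindex) (auto intro: inj_onI simp: T_def aaCB q_def cc_def sgF algebra_simps)
    have s12: "sum T R1 + sum T R2 = y \<bullet> (A *v x - u)"
      unfolding s1 s2 y_def inner_vec_def
      by (simp add: sum_negf[symmetric] sum.distrib[symmetric] algebra_simps)
    have "z \<bullet> (B *v x - b) = (\<Sum>i\<in>UNIV. if i \<in> S then (lam (CB i True) - lam (CB i False)) * ((B *v x) $ i - b $ i) else 0)"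
      unfolding z_def inner_vec_def by (intro sum.cong) auto
    also have "\<dots> = (\<Sum>i\<in>S. (lam (CB i True) - lam (CB i False)) * ((B *v x) $ i - b $ i))"
      by (subst sum.inter_filter[symmetric]) auto
    finally have s34: "sum T R3 + sum T R4 = z \<bullet> (B *v x - b)"
      unfolding s3 s4 by (simp add: sum_negf[symmetric] sum.distrib[symmetric] algebra_simps)
    have "val \<le> F q + sum T I" using lamq qD unfolding T_def by blast
    also have "\<dots> \<le> fr x + gr u + (y \<bullet> (A *v x - u) + z \<bullet> (B *v x - b))"
      unfolding Fq sumI using I1n s12 s34 by linarith
    finally show ?thesis .
  qed
  define qv where "qv = - (transpose A *v y) - (transpose B *v z)"
  have qvx: "qv \<bullet> x = - (y \<bullet> (A *v x)) - z \<bullet> (B *v x)" for x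
    unfolding qv_def by (simp add: inner_diff_left dot_lmul_matrix)
  define M where "M = - val - b \<bullet> z"
  have key2: "(qv \<bullet> x - fr x) + (y \<bullet> u - gr u) \<le> M" if x: "x \<in> edom f" and u: "u \<in> edom g" for x u
  proof -
    have "val \<le> fr x + gr u + (y \<bullet> (A *v x - u) + z \<bullet> (B *v x - b))" by (rule key[OF x u])
    moreover have "y \<bullet> (A *v x - u) + z \<bullet> (B *v x - b) = y \<bullet> (A *v x) - y \<bullet> u + z \<bullet> (B *v x) - b \<bullet> z"
      by (simp add: inner_diff_right inner_commute)
    ultimately show ?thesis unfolding M_def qvx by linarith
  qed
  have notdom: "f x = \<infinity>" if "x \<notin> edom f" for x using that unfolding edom_def by simp
  have notdomg: "g u = \<infinity>" if "u \<notin> edom g" for u using that unfolding edom_def by simp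
  have cf_le: "conj f qv \<le> ereal (M - (y \<bullet> u - gr u))" if u: "u \<in> edom g" for u
    unfolding conj_def
  proof (rule SUP_least)
    fix x
    show "ereal (qv \<bullet> x) - f x \<le> ereal (M - (y \<bullet> u - gr u))"
    proof (cases "x \<in> edom f")
      case True
      have "ereal (qv \<bullet> x) - f x = ereal (qv \<bullet> x - fr x)" using ffin[OF True] by simp
      also have "\<dots> \<le> ereal (M - (y \<bullet> u - gr u))" using key2[OF True u] by simp
      finally show ?thesis .
    next
      case False thus ?thesis using notdom[OF False] by simp
    qed
  qed
  have cf_ge: "ereal (qv \<bullet> x0 - fr x0) \<le> conj f qv"
  proof -
    have "ereal (qv \<bullet> x0) - f x0 \<le> conj f qv" unfolding conj_def by (rule SUP_upper) simp
    thus ?thesis using ffin[OF x0df] by simp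
  qed
  obtain cfv where cfv: "conj f qv = ereal cfv"
  proof (cases "conj f qv")
    case (real r) thus ?thesis using that by blast
  next
    case PInf thus ?thesis using cf_le[OF x0dg] by simp
  next
    case MInf thus ?thesis using cf_ge by simp
  qed
  have cg_le: "conj g y \<le> ereal (M - cfv)"
    unfolding conj_def
  proof (rule SUP_least)
    fix u
    show "ereal (y \<bullet> u) - g u \<le> ereal (M - cfv)"
    proof (cases "u \<in> edom g")
      case True
      have "cfv \<le> M - (y \<bullet> u - gr u)" using cf_le[OF True] cfv by simp
      moreover have "ereal (y \<bullet> u) - g u = ereal (y \<bullet> u - gr u)" using gfin[OF True] by simp
      ultimately show ?thesis by simp
    next
      case False thus ?thesis using notdomg[OF False] by simp
    qed
  qed
  have "Xi f g A B b y z = ereal cfv + conj g y + ereal (b \<bullet> z)"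
    unfolding Xi_def qv_def[symmetric] cfv ..
  also have "\<dots> \<le> ereal cfv + ereal (M - cfv) + ereal (b \<bullet> z)"
    by (intro add_mono cg_le order_refl)
  also have "\<dots> = ereal (- val)" unfolding M_def by simp
  finally have "Xi f g A B b y z \<le> ereal (- valS f g A B b S)" unfolding val_def .
  thus ?thesis using zS by blast
qed

lemma weak_dual:
  fixes f :: "real^'n \<Rightarrow> ereal" and g :: "real^'m \<Rightarrow> ereal"
    and A :: "real^'n^'m" and B :: "real^'n^'r" and b :: "real^'r"
  assumes pf: "proper_fun f" and pg: "proper_fun g"
    and bdd: "\<forall>x. ereal c \<le> f x + g (A *v x)"
    and x0: "x0 \<in> edom f" "A *v x0 \<in> edom g" "B *v x0 = b"
  shows "ereal (- valS f g A B b {i. z $ i \<noteq> 0}) \<le> Xi f g A B b y z"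
proof -
  define S where "S = {i. z $ i \<noteq> 0}"
  define fr where "fr x = real_of_ereal (f x)" for x
  define gr where "gr u = real_of_ereal (g u)" for u
  define FS where "FS = {x. x \<in> edom f \<and> A *v x \<in> edom g \<and> (\<forall>i\<in>S. (B *v x) $ i = b $ i)}"
  have val_def': "valS f g A B b S = Inf ((\<lambda>x. fr x + gr (A *v x)) ` FS)"
    unfolding valS_def fr_def gr_def FS_def ..
  have ffin: "f x = ereal (fr x)" if "x \<in> edom f" for x unfolding fr_def by (rule proper_fin[OF pf that])
  have gfin: "g u = ereal (gr u)" if "u \<in> edom g" for u unfolding gr_def by (rule proper_fin[OF pg that])
  have x0FS: "x0 \<in> FS" unfolding FS_def using x0 by simp
  define qv where "qv = - (transpose A *v y) - (transpose B *v z)"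
  have lowx: "ereal (- (fr x + gr (A *v x))) \<le> Xi f g A B b y z" if x: "x \<in> FS" for x
  proof -
    have xd: "x \<in> edom f" and ud: "A *v x \<in> edom g" and xb: "\<forall>i\<in>S. (B *v x) $ i = b $ i"
      using x unfolding FS_def by auto
    have c1: "ereal (qv \<bullet> x - fr x) \<le> conj f qv"
    proof -
      have "ereal (qv \<bullet> x) - f x \<le> conj f qv" unfolding conj_def by (rule SUP_upper) simp
      thus ?thesis using ffin[OF xd] by simp
    qed
    have c2: "ereal (y \<bullet> (A *v x) - gr (A *v x)) \<le> conj g y"
    proof -
      have "ereal (y \<bullet> (A *v x)) - g (A *v x) \<le> conj g y" unfolding conj_def by (rule SUP_upper) simp
      thus ?thesis using gfin[OF ud] by simp
    qed
    have zB: "z \<bullet> (B *v x) = b \<bullet> z"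
    proof -
      have "z \<bullet> (B *v x) = z \<bullet> b" unfolding inner_vec_def
        using xb unfolding S_def by (intro sum.cong) auto
      thus ?thesis by (simp add: inner_commute)
    qed
    have qvx: "qv \<bullet> x = - (y \<bullet> (A *v x)) - z \<bullet> (B *v x)"
      unfolding qv_def by (simp add: inner_diff_left dot_lmul_matrix)
    have "ereal (- (fr x + gr (A *v x))) =
          ereal (qv \<bullet> x - fr x) + ereal (y \<bullet> (A *v x) - gr (A *v x)) + ereal (b \<bullet> z)"
      using qvx zB by simp
    also have "\<dots> \<le> conj f qv + conj g y + ereal (b \<bullet> z)"
      by (intro add_mono c1 c2 order_refl)
    also have "\<dots> = Xi f g A B b y z" unfolding Xi_def qv_def ..
    finally show ?thesis .
  qed
  show ?thesis
  proof (cases "Xi f g A B b y z")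
    case (real X)
    have "- X \<le> Inf ((\<lambda>x. fr x + gr (A *v x)) ` FS)"
    proof (rule cInf_greatest)
      show "(\<lambda>x. fr x + gr (A *v x)) ` FS \<noteq> {}" using x0FS by blast
      fix r assume "r \<in> (\<lambda>x. fr x + gr (A *v x)) ` FS"
      then obtain x where "x \<in> FS" "r = fr x + gr (A *v x)" by blast
      thus "- X \<le> r" using lowx[of x] real by simp
    qed
    thus ?thesis unfolding S_def[symmetric] val_def' real by simp
  next
    case PInf thus ?thesis by simp
  next
    case MInf thus ?thesis using lowx[OF x0FS] by simp
  qed
qed

lemma Psi0_eq: "Psi0 \<mu> z = (\<Sum>i\<in>{i. z $ i \<noteq> 0}. \<mu> $ i)"
proof -
  have "Psi0 \<mu> z = (\<Sum>i\<in>UNIV. if z $ i \<noteq> 0 then \<mu> $ i else 0)"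
    unfolding Psi0_def by (intro sum.cong) auto
  also have "\<dots> = (\<Sum>i\<in>{i. z $ i \<noteq> 0}. \<mu> $ i)"
    by (subst sum.inter_filter[symmetric]) auto
  finally show ?thesis .
qed

lemma Psi0_le:
  assumes "\<forall>i. i \<notin> S \<longrightarrow> z $ i = 0" "\<forall>i. \<mu> $ i > 0"
  shows "Psi0 \<mu> z \<le> (\<Sum>i\<in>S. \<mu> $ i)"
proof -
  have "Psi0 \<mu> z \<le> (\<Sum>i\<in>UNIV. if i \<in> S then \<mu> $ i else 0)"
    unfolding Psi0_def using assms by (intro sum_mono) (auto simp: less_imp_le)
  also have "\<dots> = (\<Sum>i\<in>S. \<mu> $ i)"
    by (subst sum.inter_filter[symmetric]) auto
  finally show ?thesis .
qed

theorem mainTheorem7: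
  fixes f :: "real^'n \<Rightarrow> ereal" and g :: "real^'m \<Rightarrow> ereal"
    and A :: "real^'n^'m" and B :: "real^'n^'r" and b :: "real^'r"
  assumes f: "proper_fun f" "lsc_fun f" "convex_fun f"
    and g: "proper_fun g" "lsc_fun g" "convex_fun g"
    and bdd: "\<exists>c::real. \<forall>x. ereal c \<le> f x + g (A *v x)"
    and feas: "\<exists>x. (if polyhedral_fun f then x \<in> edom f else x \<in> rel_interior (edom f))
                 \<and> (if polyhedral_fun g then A *v x \<in> edom g else A *v x \<in> rel_interior (edom g))
                 \<and> B *v x = b"
  shows "\<forall>\<mu>::real^'r. (\<forall>i. \<mu> $ i > 0) \<longrightarrow>
           (\<exists>y z. \<forall>y' z'. Xi f g A B b y z + ereal (Psi0 \<mu> z)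
                        \<le> Xi f g A B b y' z' + ereal (Psi0 \<mu> z'))"
proof (intro allI impI)
  fix \<mu> :: "real^'r" assume pos: "\<forall>i. \<mu> $ i > 0"
  from bdd obtain c where c: "\<forall>x. ereal c \<le> f x + g (A *v x)" by blast
  from feas obtain x0 where
    x0f: "if polyhedral_fun f then x0 \<in> edom f else x0 \<in> rel_interior (edom f)"
    and x0g: "if polyhedral_fun g then A *v x0 \<in> edom g else A *v x0 \<in> rel_interior (edom g)"
    and x0b: "B *v x0 = b" by blast
  have x0df: "x0 \<in> edom f" using x0f rel_interior_subset by (auto split: if_splits)
  have x0dg: "A *v x0 \<in> edom g" using x0g rel_interior_subset by (auto split: if_splits)
  define \<phi> where "\<phi> S = - valS f g A B b S + (\<Sum>i\<in>S. \<mu> $ i)" for S :: "'r set"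
  have "finite (range \<phi>)" by simp
  hence "Min (range \<phi>) \<in> range \<phi>" by (intro Min_in) auto
  then obtain Sm where Sm': "Min (range \<phi>) = \<phi> Sm" by (rule rangeE)
  hence Sm: "\<phi> Sm = Min (range \<phi>)" by simp
  have Smin: "\<phi> Sm \<le> \<phi> S" for S unfolding Sm using \<open>finite (range \<phi>)\<close> by (intro Min_le) auto
  from strong_dual[OF f(1) f(3) g(1) g(3) c x0f x0g x0b, of Sm]
  obtain y z where zS: "\<forall>i. i \<notin> Sm \<longrightarrow> z $ i = 0"
    and Xy: "Xi f g A B b y z \<le> ereal (- valS f g A B b Sm)" by blast
  show "\<exists>y z. \<forall>y' z'. Xi f g A B b y z + ereal (Psi0 \<mu> z) \<le> Xi f g A B b y' z' + ereal (Psi0 \<mu> z')"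
  proof (intro exI allI)
    fix y' :: "real^'m" and z' :: "real^'r"
    define S' where "S' = {i. z' $ i \<noteq> 0}"
    have "Xi f g A B b y z + ereal (Psi0 \<mu> z) \<le> ereal (- valS f g A B b Sm) + ereal (\<Sum>i\<in>Sm. \<mu> $ i)"
      using Xy Psi0_le[OF zS pos] by (intro add_mono) auto
    also have "\<dots> = ereal (\<phi> Sm)" unfolding \<phi>_def by simp
    also have "\<dots> \<le> ereal (\<phi> S')" using Smin by simp
    also have "\<dots> = ereal (- valS f g A B b S') + ereal (Psi0 \<mu> z')"
      unfolding \<phi>_def S'_def Psi0_eq by simp
    also have "\<dots> \<le> Xi f g A B b y' z' + ereal (Psi0 \<mu> z')"
      unfolding S'_def using weak_dual[OF f(1) g(1) c x0df x0dg x0b] by (intro add_mono) auto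
    finally show "Xi f g A B b y z + ereal (Psi0 \<mu> z) \<le> Xi f g A B b y' z' + ereal (Psi0 \<mu> z')" .
  qed
qed


end
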